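(* Let $\mu$ be a positive finite Borel measure on $[0,1)$ such that $\sum_{n=0}^\infty\mu_n<\infty$, and let $1\le p<\infty$ satisfy $\left(\|(\mu_{n+k})_{n\ge0}\|_{\ell^p}\right)_{k\ge0}\in\ell^1$. Then the Hilbert-type operator $H_\mu:H^\infty\to A(\mathbb{T})$ is a well defined compact linear operator.
   Context: $\mu_n=\int_0^1t^n\,d\mu(t)$. $H^\infty$ is the Banach space of bounded holomorphic functions on the unit disc $\mathbb{D}$ with the sup norm. $A(\mathbb{T})$ is the Wiener algebra, identified with $\{f(z)=\sum_{n\ge0}a_nz^n:\sum_n|a_n|<\infty\}$ with norm $\sum_n|a_n|$. For $f(z)=\sum_na_nz^n$, $H_\mu(f)(z)=\sum_{k=0}^\infty\left(\sum_{n=0}^\infty\mu_{n+k}a_n\right)z^k$. *)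

theory Defs
  imports "HOL-Analysis.Analysis"
begin

definition moment :: "real measure \<Rightarrow> nat \<Rightarrow> real" where
  "moment M n = (\<integral>t. t ^ n \<partial>M)"

definition Hinf :: "(complex \<Rightarrow> complex) set" where
  "Hinf = {f. f holomorphic_on ball 0 1 \<and> (\<exists>C. \<forall>z\<in>ball 0 1. norm (f z) \<le> C)}"

definition Hinf_ball :: "(complex \<Rightarrow> complex) set" where
  "Hinf_ball = {f. f holomorphic_on ball 0 1 \<and> (\<forall>z\<in>ball 0 1. norm (f z) \<le> 1)}"

definition taylor_coeff :: "(complex \<Rightarrow> complex) \<Rightarrow> nat \<Rightarrow> complex" where
  "taylor_coeff f n = (deriv ^^ n) f 0 / of_nat (fact n)"

definition Hmu :: "real measure \<Rightarrow> (complex \<Rightarrow> complex) \<Rightarrow> nat \<Rightarrow> complex" where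
  "Hmu M f k = (\<Sum>n. complex_of_real (moment M (n + k)) * taylor_coeff f n)"

text \<open>Norm of the Wiener algebra A(T), on coefficient sequences.\<close>
definition wiener_norm :: "(nat \<Rightarrow> complex) \<Rightarrow> real" where
  "wiener_norm c = (\<Sum>k. norm (c k))"

end

theory Submission
  imports Defs "HOL-Complex_Analysis.Complex_Analysis"
begin

definition hof :: "(complex \<Rightarrow> complex) \<Rightarrow> real \<Rightarrow> complex" where
  "hof f t = indicator {0..<1} t *\<^sub>R f (complex_of_real t)"

locale hm =
  fixes M :: "real measure"
  assumes sM: "sets M = sets borel" and fM: "finite_measure M"
    and nM: "emeasure M (UNIV - {0..<1}) = 0" and sumM: "summable (\<lambda>n. moment M n)"
begin

sublocale finite_measure M by (rule fM)

lemma spaceM: "space M = UNIV" using sets_eq_imp_space_eq[OF sM] by simp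

lemma measM: "f \<in> borel_measurable borel \<Longrightarrow> f \<in> borel_measurable M"
  by (subst measurable_cong_sets[OF sM refl]) simp

lemma idM[measurable]: "(\<lambda>x. x) \<in> borel_measurable M"
  by (rule measM) simp

lemma AE01: "AE t in M. 0 \<le> t \<and> t < 1"
proof (rule AE_I')
  show "UNIV - {0..<1} \<in> null_sets M" using nM sM by (simp add: null_sets_def)
  show "{x \<in> space M. \<not> (0 \<le> x \<and> x < 1)} \<subseteq> UNIV - {0..<1}" by auto
qed

lemma mom_int: "integrable M (\<lambda>t. t ^ n)"
proof (rule integrable_const_bound[where B=1])
  show "AE t in M. norm (t ^ n) \<le> 1" using AE01
    by eventually_elim (simp add: power_le_one power_abs)
  show "(\<lambda>t. t ^ n) \<in> borel_measurable M" by (intro measM) measurable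
qed

lemma mom_nonneg: "0 \<le> moment M n"
  unfolding moment_def using AE01 by (intro integral_nonneg_AE) auto

lemma L1:
  fixes h :: "real \<Rightarrow> complex"
  assumes hm[measurable]: "h \<in> borel_measurable M" and hb: "AE t in M. norm (h t) \<le> B"
  shows "integrable M (\<lambda>t. norm (h t) / (1 - t))"
    and "summable (\<lambda>k. norm (\<integral>t. complex_of_real t ^ k * h t \<partial>M))"
    and "(\<Sum>k. norm (\<integral>t. complex_of_real t ^ k * h t \<partial>M)) \<le> (\<integral>t. norm (h t) / (1 - t) \<partial>M)"
proof -
  define f where "f k t = \<bar>t\<bar> ^ k * norm (h t)" for k t
  have fm[measurable]: "f k \<in> borel_measurable M" for k
    unfolding f_def by (intro borel_measurable_times) (auto intro: measM)
  have fint: "integrable M (f k)" for k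
  proof (rule integrable_const_bound[where B=B])
    show "AE t in M. norm (f k t) \<le> B" using AE01 hb
    proof eventually_elim
      case (elim t)
      have "\<bar>t\<bar> ^ k \<le> 1" using elim by (simp add: power_le_one)
      then have "\<bar>t\<bar> ^ k * norm (h t) \<le> 1 * norm (h t)" by (intro mult_right_mono) auto
      then show ?case using elim unfolding f_def by simp
    qed
  qed (rule fm)
  have fle: "(\<integral>t. norm (f k t) \<partial>M) \<le> B * moment M k" for k
  proof -
    have "(\<integral>t. norm (f k t) \<partial>M) = (\<integral>t. f k t \<partial>M)" unfolding f_def by simp
    also have "\<dots> \<le> (\<integral>t. t ^ k * B \<partial>M)"
    proof (rule integral_mono_AE[OF fint])
      show "integrable M (\<lambda>t. t ^ k * B)" using mom_int by simp
      show "AE t in M. f k t \<le> t ^ k * B" using AE01 hb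
        by eventually_elim (auto simp: f_def intro: mult_left_mono)
    qed
    also have "\<dots> = B * moment M k" by (simp add: moment_def)
    finally show ?thesis .
  qed
  have s1: "summable (\<lambda>k. \<integral>t. norm (f k t) \<partial>M)"
  proof (rule summable_comparison_test[where g="\<lambda>k. B * moment M k"])
    show "\<exists>N. \<forall>n\<ge>N. norm (\<integral>t. norm (f n t) \<partial>M) \<le> B * moment M n"
      using fle by (auto intro!: exI[of _ 0])
    show "summable (\<lambda>k. B * moment M k)" using sumM by (rule summable_mult)
  qed
  have s2: "AE t in M. summable (\<lambda>k. norm (f k t))" using AE01
  proof eventually_elim
    case (elim t)
    have "summable (\<lambda>k. \<bar>t\<bar> ^ k)" using elim by (intro summable_geometric) auto
    then show ?case unfolding f_def by (simp add: summable_mult2)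
  qed
  have I: "integrable M (\<lambda>t. \<Sum>k. f k t)" by (rule integrable_suminf[OF fint s2 s1])
  have SI: "(\<lambda>k. \<integral>t. f k t \<partial>M) sums (\<integral>t. (\<Sum>k. f k t) \<partial>M)" by (rule sums_integral[OF fint s2 s1])
  have eq: "AE t in M. (\<Sum>k. f k t) = norm (h t) / (1 - t)" using AE01
  proof eventually_elim
    case (elim t)
    have "(\<Sum>k. f k t) = (\<Sum>k. \<bar>t\<bar> ^ k) * norm (h t)"
      unfolding f_def using elim by (intro suminf_mult2[symmetric] summable_geometric) auto
    also have "\<dots> = norm (h t) / (1 - t)" using elim by (subst suminf_geometric) auto
    finally show ?case .
  qed
  show I2: "integrable M (\<lambda>t. norm (h t) / (1 - t))"
  proof -
    have "(\<lambda>t. norm (h t) / (1 - t)) \<in> borel_measurable M" by measurable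
    then show ?thesis using I eq by (subst integrable_cong_AE[symmetric]) auto
  qed
  have SI2: "(\<lambda>k. \<integral>t. f k t \<partial>M) sums (\<integral>t. norm (h t) / (1 - t) \<partial>M)"
  proof -
    have "(\<integral>t. (\<Sum>k. f k t) \<partial>M) = (\<integral>t. norm (h t) / (1 - t) \<partial>M)"
      using eq by (intro integral_cong_AE) auto
    then show ?thesis using SI by simp
  qed
  have bnd: "norm (\<integral>t. complex_of_real t ^ k * h t \<partial>M) \<le> (\<integral>t. f k t \<partial>M)" for k
  proof -
    have "norm (\<integral>t. complex_of_real t ^ k * h t \<partial>M) \<le> (\<integral>t. norm (complex_of_real t ^ k * h t) \<partial>M)"
      by (rule integral_norm_bound)
    also have "\<dots> = (\<integral>t. f k t \<partial>M)" unfolding f_def by (simp only: norm_mult norm_power norm_of_real)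
    finally show ?thesis .
  qed
  have sg: "summable (\<lambda>k. \<integral>t. f k t \<partial>M)" using SI2 by (rule sums_summable)
  show S: "summable (\<lambda>k. norm (\<integral>t. complex_of_real t ^ k * h t \<partial>M))"
    by (rule summable_comparison_test[OF _ sg]) (use bnd in auto)
  have "(\<Sum>k. norm (\<integral>t. complex_of_real t ^ k * h t \<partial>M)) \<le> (\<Sum>k. \<integral>t. f k t \<partial>M)"
    by (rule suminf_le[OF bnd S sg])
  also have "\<dots> = (\<integral>t. norm (h t) / (1 - t) \<partial>M)" using SI2 by (rule sums_unique[symmetric])
  finally show "(\<Sum>k. norm (\<integral>t. complex_of_real t ^ k * h t \<partial>M)) \<le> (\<integral>t. norm (h t) / (1 - t) \<partial>M)" .
qed

lemma hof_meas: "f holomorphic_on ball 0 1 \<Longrightarrow> hof f \<in> borel_measurable M"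
proof -
  assume hol: "f holomorphic_on ball 0 1"
  have "continuous_on {0..<1} (\<lambda>t. f (complex_of_real t))"
  proof (rule continuous_on_compose2[of "ball 0 1" f])
    show "continuous_on (ball 0 1) f" using hol by (rule holomorphic_on_imp_continuous_on)
    show "continuous_on {0..<1} complex_of_real" by (intro continuous_intros)
    show "complex_of_real ` {0..<1} \<subseteq> ball 0 1" by auto
  qed
  then have "(\<lambda>t. indicator {0..<1} t *\<^sub>R f (complex_of_real t)) \<in> borel_measurable borel"
    by (intro borel_measurable_continuous_on_indicator) auto
  then show ?thesis unfolding hof_def[abs_def] by (rule measM)
qed

lemma hof_AE: "\<forall>z\<in>ball 0 1. norm (f z) \<le> C \<Longrightarrow> AE t in M. norm (hof f t) \<le> C"
  using AE01 by eventually_elim (auto simp: hof_def)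

lemma hof_int:
  assumes hol: "f holomorphic_on ball 0 1" and b: "\<forall>z\<in>ball 0 1. norm (f z) \<le> C"
  shows "integrable M (\<lambda>t. complex_of_real t ^ k * hof f t)"
proof (rule integrable_const_bound[where B=C])
  have [measurable]: "hof f \<in> borel_measurable M" using hol by (rule hof_meas)
  show "(\<lambda>t. complex_of_real t ^ k * hof f t) \<in> borel_measurable M" by measurable
  show "AE t in M. norm (complex_of_real t ^ k * hof f t) \<le> C" using AE01 hof_AE[OF b]
  proof eventually_elim
    case (elim t)
    have "\<bar>t\<bar> ^ k \<le> 1" using elim by (simp add: power_le_one)
    then have "\<bar>t\<bar> ^ k * norm (hof f t) \<le> 1 * norm (hof f t)" by (intro mult_right_mono) auto
    then show ?case using elim by (simp add: norm_mult norm_power)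
  qed
qed

end

lemma coeff_bound:
  assumes hol: "f holomorphic_on ball 0 1" and b: "\<forall>z\<in>ball 0 1. norm (f z) \<le> C"
  shows "norm (taylor_coeff f n) \<le> C"
proof -
  have ev: "eventually (\<lambda>r. norm (taylor_coeff f n) \<le> C / r ^ n) (at_left (1::real))"
    using eventually_at_left_real[OF zero_less_one]
  proof (rule eventually_mono)
    fix r :: real assume r: "r \<in> {0<..<1}"
    have "norm ((deriv ^^ n) f 0) \<le> fact n * C / r ^ n"
    proof (rule Cauchy_inequality)
      show "f holomorphic_on ball 0 r" using hol by (rule holomorphic_on_subset) (use r in \<open>auto simp: subset_ball\<close>)
      show "continuous_on (cball 0 r) f"
        using holomorphic_on_imp_continuous_on[OF hol] by (rule continuous_on_subset) (use r in auto)
      show "0 < r" using r by auto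
      show "norm (f x) \<le> C" if "norm (0 - x) = r" for x using that r b by auto
    qed
    then have "norm ((deriv ^^ n) f 0) / fact n \<le> (fact n * C / r ^ n) / fact n"
      by (rule divide_right_mono) auto
    then show "norm (taylor_coeff f n) \<le> C / r ^ n"
      unfolding taylor_coeff_def by (simp add: norm_divide)
  qed
  have lim: "((\<lambda>r. C / r ^ n) \<longlongrightarrow> C / 1 ^ n) (at_left (1::real))" by (intro tendsto_intros) auto
  show ?thesis using tendsto_le[OF trivial_limit_at_left_real lim tendsto_const ev] by simp
qed

context hm begin

lemma rep:
  assumes hol: "f holomorphic_on ball 0 1" and b: "\<forall>z\<in>ball 0 1. norm (f z) \<le> C"
  shows "summable (\<lambda>n. complex_of_real (moment M (n + k)) * taylor_coeff f n)"
    and "Hmu M f k = (\<integral>t. complex_of_real t ^ k * hof f t \<partial>M)"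
proof -
  have hofm[measurable]: "hof f \<in> borel_measurable M" using hol by (rule hof_meas)
  define a where "a = taylor_coeff f"
  have ab: "norm (a n) \<le> C" for n unfolding a_def using hol b by (rule coeff_bound)
  have sm: "summable (\<lambda>n. moment M (n + k))" using sumM by (rule summable_ignore_initial_segment)
  have smC: "summable (\<lambda>n. C * moment M (n + k))" using sm by (rule summable_mult)
  show "summable (\<lambda>n. complex_of_real (moment M (n + k)) * taylor_coeff f n)"
  proof (rule summable_comparison_test[OF _ smC])
    show "\<exists>N. \<forall>n\<ge>N. norm (complex_of_real (moment M (n + k)) * taylor_coeff f n) \<le> C * moment M (n + k)"
    proof (intro exI[of _ 0] allI impI)
      fix n
      have "norm (complex_of_real (moment M (n + k)) * taylor_coeff f n) = moment M (n + k) * norm (a n)"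
        using mom_nonneg[of "n + k"] by (simp add: norm_mult a_def)
      also have "\<dots> \<le> moment M (n + k) * C" by (rule mult_left_mono[OF ab mom_nonneg])
      finally show "norm (complex_of_real (moment M (n + k)) * taylor_coeff f n) \<le> C * moment M (n + k)"
        by (simp add: mult.commute)
    qed
  qed
  define g where "g n t = a n * complex_of_real (indicator {0..<1} t * t ^ (n + k))" for n t
  have gm[measurable]: "g n \<in> borel_measurable M" for n
    unfolding g_def by (intro measM) measurable
  have gAE: "AE t in M. norm (g n t) \<le> C * t ^ (n + k)" for n using AE01
  proof eventually_elim
    case (elim t)
    have "norm (g n t) = norm (a n) * t ^ (n + k)" using elim by (simp add: g_def norm_mult norm_power indicator_def)
    also have "\<dots> \<le> C * t ^ (n + k)" using ab elim by (intro mult_right_mono) auto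
    finally show ?case .
  qed
  have gint: "integrable M (g n)" for n
  proof (rule integrable_const_bound[where B=C])
    show "AE t in M. norm (g n t) \<le> C" using AE01 gAE[of n]
    proof eventually_elim
      case (elim t)
      have "t ^ (n + k) \<le> 1" using elim by (simp add: power_le_one)
      then have "C * t ^ (n + k) \<le> C" 
      proof -
        have C0: "0 \<le> C" using norm_ge_zero[of "a 0"] ab[of 0] by linarith
        show ?thesis by (rule mult_left_le[OF \<open>t ^ (n + k) \<le> 1\<close> C0])
      qed
      then show ?case using elim by linarith
    qed
  qed (rule gm)
  have momI: "moment M m = (\<integral>t. indicator {0..<1} t * t ^ m \<partial>M)" for m
    unfolding moment_def using AE01 by (intro integral_cong_AE) (auto simp: indicator_def)
  have gI: "(\<integral>t. g n t \<partial>M) = complex_of_real (moment M (n + k)) * a n" for n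
  proof -
    have "(\<integral>t. g n t \<partial>M) = a n * (\<integral>t. complex_of_real (indicator {0..<1} t * t ^ (n + k)) \<partial>M)"
      unfolding g_def by (rule integral_mult_right_zero)
    also have "\<dots> = a n * complex_of_real (\<integral>t. indicator {0..<1} t * t ^ (n + k) \<partial>M)"
      by (simp only: integral_complex_of_real)
    also have "\<dots> = complex_of_real (moment M (n + k)) * a n" by (simp only: momI mult.commute)
    finally show ?thesis .
  qed
  have gN: "(\<integral>t. norm (g n t) \<partial>M) \<le> C * moment M (n + k)" for n
  proof -
    have "(\<integral>t. norm (g n t) \<partial>M) \<le> (\<integral>t. C * t ^ (n + k) \<partial>M)"
      proof (rule integral_mono_AE[OF integrable_norm[OF gint]])
        show "integrable M (\<lambda>t. C * t ^ (n + k))" using mom_int by simp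
      qed (rule gAE)
    then show ?thesis by (simp add: moment_def)
  qed
  have s1: "summable (\<lambda>n. \<integral>t. norm (g n t) \<partial>M)"
  proof (rule summable_comparison_test[OF _ smC])
    show "\<exists>N. \<forall>n\<ge>N. norm (\<integral>t. norm (g n t) \<partial>M) \<le> C * moment M (n + k)"
      using gN by (auto intro!: exI[of _ 0])
  qed
  have ser: "AE t in M. (\<lambda>n. g n t) sums (complex_of_real t ^ k * hof f t)" using AE01
  proof eventually_elim
    case (elim t)
    have "complex_of_real t \<in> ball 0 1" using elim by auto
    from holomorphic_power_series[OF hol this]
    have "(\<lambda>n. a n * complex_of_real t ^ n) sums f (complex_of_real t)"
      by (simp add: a_def taylor_coeff_def)
    from sums_mult[OF this, of "complex_of_real t ^ k"]
    show ?case using elim by (simp add: g_def hof_def power_add mult_ac)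
  qed
  have s2: "AE t in M. summable (\<lambda>n. norm (g n t))" using AE01
  proof (eventually_elim)
    case (elim t)
    have "summable (\<lambda>n. C * t ^ k * t ^ n)" using elim
      by (intro summable_mult summable_geometric) auto
    moreover have "norm (norm (g n t)) \<le> C * t ^ k * t ^ n" for n
    proof -
      have "norm (norm (g n t)) = norm (a n) * t ^ (n + k)" using elim by (simp add: g_def norm_mult norm_power indicator_def)
      also have "\<dots> \<le> C * t ^ (n + k)" using ab elim by (intro mult_right_mono) auto
      finally show ?thesis by (simp add: power_add mult_ac)
    qed
    ultimately show ?case by (intro summable_comparison_test[of "\<lambda>n. norm (g n t)" "\<lambda>n. C * t ^ k * t ^ n"] exI[of _ 0] allI impI)
  qed
  have "(\<lambda>n. \<integral>t. g n t \<partial>M) sums (\<integral>t. (\<Sum>n. g n t) \<partial>M)" by (rule sums_integral[OF gint s2 s1])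
  moreover have "(\<integral>t. (\<Sum>n. g n t) \<partial>M) = (\<integral>t. complex_of_real t ^ k * hof f t \<partial>M)"
    using ser by (intro integral_cong_AE) (auto simp: sums_iff)
  ultimately have "(\<lambda>n. complex_of_real (moment M (n + k)) * taylor_coeff f n) sums (\<integral>t. complex_of_real t ^ k * hof f t \<partial>M)"
    by (simp only: gI a_def)
  then show "Hmu M f k = (\<integral>t. complex_of_real t ^ k * hof f t \<partial>M)"
    unfolding Hmu_def by (rule sums_unique[symmetric])
qed
end

theorem proposition30:
  fixes M :: "real measure" and p :: real
  assumes "sets M = sets borel"
    and "finite_measure M"
    and "emeasure M (UNIV - {0..<1}) = 0"
    and "summable (\<lambda>n. moment M n)"
    and "1 \<le> p"
    and "\<forall>k. summable (\<lambda>n. \<bar>moment M (n + k)\<bar> powr p)"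
    and "summable (\<lambda>k. (\<Sum>n. \<bar>moment M (n + k)\<bar> powr p) powr (1 / p))"
  shows
    "(\<forall>f\<in>Hinf. (\<forall>k. summable (\<lambda>n. complex_of_real (moment M (n + k)) * taylor_coeff f n))
                 \<and> summable (\<lambda>k. norm (Hmu M f k)))
     \<and> (\<forall>f\<in>Hinf. \<forall>g\<in>Hinf. \<forall>a b :: complex.
           Hmu M (\<lambda>z. a * f z + b * g z) = (\<lambda>k. a * Hmu M f k + b * Hmu M g k))
     \<and> (\<forall>F :: nat \<Rightarrow> complex \<Rightarrow> complex. (\<forall>j. F j \<in> Hinf_ball) \<longrightarrow>
           (\<exists>r c. strict_mono r \<and> summable (\<lambda>k. norm (c k)) \<and>
              (\<lambda>j. wiener_norm (\<lambda>k. Hmu M (F (r j)) k - c k)) \<longlonglongrightarrow> 0))"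
proof -
  interpret hm M by (rule hm.intro[OF assms(1-4)])
  have sumH: "summable (\<lambda>k. norm (Hmu M f k))"
    if hol: "f holomorphic_on ball 0 1" and b: "\<forall>z\<in>ball 0 1. norm (f z) \<le> C" for f C
  proof -
    have "summable (\<lambda>k. norm (\<integral>t. complex_of_real t ^ k * hof f t \<partial>M))"
      by (rule L1(2)[OF hof_meas[OF hol] hof_AE[OF b]])
    then show ?thesis using rep(2)[OF hol b] by simp
  qed
  have P1: "\<forall>f\<in>Hinf. (\<forall>k. summable (\<lambda>n. complex_of_real (moment M (n + k)) * taylor_coeff f n))
                 \<and> summable (\<lambda>k. norm (Hmu M f k))"
  proof
    fix f assume "f \<in> Hinf"
    then obtain C where hol: "f holomorphic_on ball 0 1" and b: "\<forall>z\<in>ball 0 1. norm (f z) \<le> C"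
      by (auto simp: Hinf_def)
    show "(\<forall>k. summable (\<lambda>n. complex_of_real (moment M (n + k)) * taylor_coeff f n))
                 \<and> summable (\<lambda>k. norm (Hmu M f k))"
      using rep(1)[OF hol b] sumH[OF hol b] by blast
  qed
  have P2: "\<forall>f\<in>Hinf. \<forall>g\<in>Hinf. \<forall>a b :: complex.
           Hmu M (\<lambda>z. a * f z + b * g z) = (\<lambda>k. a * Hmu M f k + b * Hmu M g k)"
  proof (intro ballI allI)
    fix f g :: "complex \<Rightarrow> complex" and a b :: complex
    assume "f \<in> Hinf" "g \<in> Hinf"
    then obtain C1 C2 where hf: "f holomorphic_on ball 0 1" and bf: "\<forall>z\<in>ball 0 1. norm (f z) \<le> C1"
      and hg: "g holomorphic_on ball 0 1" and bg: "\<forall>z\<in>ball 0 1. norm (g z) \<le> C2"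
      by (auto simp: Hinf_def)
    have hh: "(\<lambda>z. a * f z + b * g z) holomorphic_on ball 0 1" using hf hg by (intro holomorphic_intros)
    have bh: "\<forall>z\<in>ball 0 1. norm (a * f z + b * g z) \<le> norm a * C1 + norm b * C2"
    proof
      fix z :: complex assume z: "z \<in> ball 0 1"
      have "norm (a * f z + b * g z) \<le> norm a * norm (f z) + norm b * norm (g z)"
        by (metis norm_mult norm_triangle_ineq)
      also have "\<dots> \<le> norm a * C1 + norm b * C2"
        using z bf bg by (intro add_mono mult_left_mono) auto
      finally show "norm (a * f z + b * g z) \<le> norm a * C1 + norm b * C2" .
    qed
    show "Hmu M (\<lambda>z. a * f z + b * g z) = (\<lambda>k. a * Hmu M f k + b * Hmu M g k)"
    proof
      fix k
      have eq: "hof (\<lambda>z. a * f z + b * g z) t = a * hof f t + b * hof g t" for t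
        by (simp add: hof_def indicator_def)
      have "Hmu M (\<lambda>z. a * f z + b * g z) k
          = (\<integral>t. a * (complex_of_real t ^ k * hof f t) + b * (complex_of_real t ^ k * hof g t) \<partial>M)"
        unfolding rep(2)[OF hh bh] eq by (simp add: algebra_simps)
      also have "\<dots> = a * Hmu M f k + b * Hmu M g k"
        unfolding rep(2)[OF hf bf] rep(2)[OF hg bg]
        using hof_int[OF hf bf, of k] hof_int[OF hg bg, of k] by simp
      finally show "Hmu M (\<lambda>z. a * f z + b * g z) k = a * Hmu M f k + b * Hmu M g k" .
    qed
  qed
  have P3: "\<forall>F :: nat \<Rightarrow> complex \<Rightarrow> complex. (\<forall>j. F j \<in> Hinf_ball) \<longrightarrow>
           (\<exists>r c. strict_mono r \<and> summable (\<lambda>k. norm (c k)) \<and>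
              (\<lambda>j. wiener_norm (\<lambda>k. Hmu M (F (r j)) k - c k)) \<longlonglongrightarrow> 0)"
  proof (intro allI impI)
    fix F :: "nat \<Rightarrow> complex \<Rightarrow> complex" assume FB: "\<forall>j. F j \<in> Hinf_ball"
    have Fh: "F j holomorphic_on ball 0 1" and Fb: "\<forall>z\<in>ball 0 1. norm (F j z) \<le> 1" for j
      using FB by (auto simp: Hinf_ball_def)
    obtain g r where gh: "g holomorphic_on ball 0 1" and sr: "strict_mono (r :: nat \<Rightarrow> nat)"
      and lim: "\<And>x. x \<in> ball 0 1 \<Longrightarrow> ((\<lambda>n. F (r n) x) \<longlongrightarrow> g x) sequentially"
    proof (rule Montel[of "ball 0 1" Hinf_ball F])
      show "open (ball (0::complex) 1)" by simp
      show "\<And>h. h \<in> Hinf_ball \<Longrightarrow> h holomorphic_on ball 0 1" by (auto simp: Hinf_ball_def)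
      show "\<exists>B. \<forall>h\<in>Hinf_ball. \<forall>z\<in>K. norm (h z) \<le> B" if "compact K" "K \<subseteq> ball 0 1" for K
        using that by (intro exI[of _ 1]) (auto simp: Hinf_ball_def)
      show "range F \<subseteq> Hinf_ball" using FB by auto
    qed auto
    have gb: "\<forall>z\<in>ball 0 1. norm (g z) \<le> 1"
    proof
      fix z :: complex assume z: "z \<in> ball 0 1"
      show "norm (g z) \<le> 1"
        by (rule Lim_norm_ubound[OF trivial_limit_sequentially lim[OF z]]) (use Fb z in auto)
    qed
    define c where "c = Hmu M g"
    have sc: "summable (\<lambda>k. norm (c k))" unfolding c_def by (rule sumH[OF gh gb])
    define D where "D j t = hof (F (r j)) t - hof g t" for j t
    have Dm[measurable]: "D j \<in> borel_measurable M" for j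
      unfolding D_def[abs_def] using hof_meas[OF Fh] hof_meas[OF gh] by measurable
    have DAE: "AE t in M. norm (D j t) \<le> 2" for j
      using hof_AE[OF Fb[of "r j"]] hof_AE[OF gb]
    proof eventually_elim
      case (elim t)
      have "norm (D j t) \<le> norm (hof (F (r j)) t) + norm (hof g t)" unfolding D_def by (rule norm_triangle_ineq4)
      then show ?case using elim by linarith
    qed
    define W where "W j = wiener_norm (\<lambda>k. Hmu M (F (r j)) k - c k)" for j
    define I where "I j = (\<integral>t. norm (D j t) / (1 - t) \<partial>M)" for j
    have WI: "norm (W j) \<le> I j" for j
    proof -
      have eqk: "Hmu M (F (r j)) k - c k = (\<integral>t. complex_of_real t ^ k * D j t \<partial>M)" for k
        unfolding c_def rep(2)[OF Fh Fb] rep(2)[OF gh gb] D_def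
        using hof_int[OF Fh Fb, of k] hof_int[OF gh gb, of k] by (simp add: right_diff_distrib)
      have S: "summable (\<lambda>k. norm (\<integral>t. complex_of_real t ^ k * D j t \<partial>M))"
        by (rule L1(2)[OF Dm DAE])
      have Weq: "W j = (\<Sum>k. norm (\<integral>t. complex_of_real t ^ k * D j t \<partial>M))"
        unfolding W_def wiener_norm_def eqk ..
      moreover have "0 \<le> W j" unfolding Weq using S by (intro suminf_nonneg) auto
      ultimately show ?thesis unfolding I_def Weq using L1(3)[OF Dm DAE] by simp
    qed
    have one_h: "(\<lambda>z::complex. 1::complex) holomorphic_on ball 0 1" by simp
    have one_b: "\<forall>z\<in>ball 0 1. norm ((\<lambda>z::complex. 1::complex) z) \<le> 1" by simp
    have wint: "integrable M (\<lambda>t. 2 * (norm (hof (\<lambda>z. 1) t) / (1 - t)))"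
      using integrable_mult_right[OF L1(1)[OF hof_meas[OF one_h] hof_AE[OF one_b]], of 2] by (simp only:)
    have I0: "I \<longlonglongrightarrow> 0"
    proof -
      have "(\<lambda>j. \<integral>t. norm (D j t) / (1 - t) \<partial>M) \<longlonglongrightarrow> (\<integral>t. 0 \<partial>M)"
      proof (rule integral_dominated_convergence[OF _ _ wint])
        show "(\<lambda>t. 0::real) \<in> borel_measurable M" by simp
        show "(\<lambda>t. norm (D j t) / (1 - t)) \<in> borel_measurable M" for j by measurable
        show "AE t in M. (\<lambda>j. norm (D j t) / (1 - t)) \<longlonglongrightarrow> 0" using AE01
        proof eventually_elim
          case (elim t)
          have "complex_of_real t \<in> ball 0 1" using elim by auto
          from lim[OF this] have "(\<lambda>j. F (r j) (complex_of_real t) - g (complex_of_real t)) \<longlonglongrightarrow> 0"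
            by (simp add: LIM_zero)
          then have "(\<lambda>j. D j t) \<longlonglongrightarrow> 0" using elim by (simp add: D_def hof_def)
          then have "(\<lambda>j. norm (D j t)) \<longlonglongrightarrow> 0" by (rule tendsto_norm_zero)
          then show ?case by (rule tendsto_divide_zero)
        qed
        show "AE t in M. norm (norm (D j t) / (1 - t)) \<le> 2 * (norm (hof (\<lambda>z. 1) t) / (1 - t))" for j
          using AE01 DAE[of j]
        proof eventually_elim
          case (elim t)
          have "norm (D j t) / (1 - t) \<le> 2 / (1 - t)" using elim by (intro divide_right_mono) auto
          then show ?case using elim by (simp add: hof_def)
        qed
      qed
      then show ?thesis unfolding I_def by simp
    qed
    have "W \<longlonglongrightarrow> 0"
      by (rule Lim_null_comparison[OF _ I0]) (use WI in auto)
    then show "\<exists>r c. strict_mono r \<and> summable (\<lambda>k. norm (c k)) \<and>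
              (\<lambda>j. wiener_norm (\<lambda>k. Hmu M (F (r j)) k - c k)) \<longlonglongrightarrow> 0"
      using sr sc unfolding W_def by blast
  qed
  show ?thesis using P1 P2 P3 by blast
qed

end
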